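(* Let $\sigma$ be a permutation of length $m$ with exactly one descent and exactly $i$ adjacency pairs, and let $\pi\in\{M_n,W_n\}$ have exactly one descent, with $\sigma\le\pi$. Then $$\mu(\sigma,\pi)=(-1)^{n-m}\binom{\lfloor (n+m-i-a)/2\rfloor}{m},$$ where $a=0$ if $\sigma$ and $\pi$ are related and $a=1$ otherwise.
   Context: A permutation of length $n$ is an arrangement of $1,\dots,n$. The permutation poset is ordered by pattern containment: $\sigma\le\pi$ if $\pi$ has a subsequence in the same relative order as $\sigma$. $\mu$ is its Möbius function: $\mu(a,a)=1$, $\mu(a,b)=-\sum_{a\le z<b}\mu(a,z)$ for $a<b$, $\mu(a,b)=0$ if $a\not\le b$. A descent is an index $d$ with $\pi_d>\pi_{d+1}$. An adjacency pair is an index $j$ with $\sigma_{j+1}=\sigma_j+1$; the number of adjacency pairs is the number of such indices. $M_n$ lists the even numbers $2,4,\dots\le n$ increasingly followed by the odd numbers $1,3,\dots\le n$ increasingly (e.g. $M_6=246135$); $W_n$ lists the odd numbers increasingly followed by the even numbers increasingly (e.g. $W_5=13524$). Two permutations with exactly one descent are related if the letter $1$ lies on the same side of the descent in both (i.e. in both it is before the descent, or in both it is after the descent). *)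

theory Defs
  imports Main
begin

definition is_perm :: "nat list \<Rightarrow> bool" where
  "is_perm xs \<longleftrightarrow> distinct xs \<and> set xs = {1..length xs}"

definition order_iso :: "nat list \<Rightarrow> nat list \<Rightarrow> bool" where
  "order_iso xs ys \<longleftrightarrow> length xs = length ys \<and>
     (\<forall>j < length xs. \<forall>k < length xs. xs ! j < xs ! k \<longleftrightarrow> ys ! j < ys ! k)"

definition contains :: "nat list \<Rightarrow> nat list \<Rightarrow> bool" (infix "\<preceq>\<^sub>p" 50) where
  "sigma \<preceq>\<^sub>p pi \<longleftrightarrow> (\<exists>I. I \<subseteq> {0..<length pi} \<and> order_iso sigma (nths pi I))"

text \<open>Moebius function of the permutation poset. For permutations z, b with z \<le> b,
  z < b holds iff length z < length b.\<close>
function mu :: "nat list \<Rightarrow> nat list \<Rightarrow> int" where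
  "mu a b = (if a = b then 1
             else if a \<preceq>\<^sub>p b then
               - (\<Sum>z \<in> {z. is_perm z \<and> length z < length b \<and> a \<preceq>\<^sub>p z \<and> z \<preceq>\<^sub>p b}. mu a z)
             else 0)"
  by auto
termination
  by (relation "measure (\<lambda>(a, b). length b)") auto

definition descents :: "nat list \<Rightarrow> nat set" where
  "descents xs = {d. Suc d < length xs \<and> xs ! d > xs ! Suc d}"

definition adjacencies :: "nat list \<Rightarrow> nat" where
  "adjacencies xs = card {j. Suc j < length xs \<and> xs ! Suc j = xs ! j + 1}"

definition M_perm :: "nat \<Rightarrow> nat list" where
  "M_perm n = filter even [1..<n+1] @ filter odd [1..<n+1]"

definition W_perm :: "nat \<Rightarrow> nat list" where
  "W_perm n = filter odd [1..<n+1] @ filter even [1..<n+1]"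

text \<open>For a permutation with exactly one descent at (0-based) position d, i.e. between
  entries d and d+1: the letter 1 lies before the descent iff its index is \<le> d.\<close>
definition one_before_descent :: "nat list \<Rightarrow> bool" where
  "one_before_descent xs \<longleftrightarrow>
     (\<forall>d \<in> descents xs. \<forall>j < length xs. xs ! j = 1 \<longrightarrow> j \<le> d)"

definition related :: "nat list \<Rightarrow> nat list \<Rightarrow> bool" where
  "related s p \<longleftrightarrow> (one_before_descent s \<longleftrightarrow> one_before_descent p)"

end

theory Submission
  imports Defs "HOL-Library.Sublist"
begin

lemma nths_restrict: "nths xs I = nths xs (I \<inter> {0..<length xs})"
  unfolding nths_def
  by (rule arg_cong[where f="map fst"], rule filter_cong) (auto dest: set_zip_rightD)

lemma contains_subseq: "a \<preceq>\<^sub>p b \<longleftrightarrow> (\<exists>ys. subseq ys b \<and> order_iso a ys)"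
  unfolding contains_def subseq_conv_nths
  by (metis inf_le2 nths_restrict)

lemma order_iso_refl: "order_iso xs xs"
  by (simp add: order_iso_def)

lemma order_iso_sym: "order_iso xs ys \<Longrightarrow> order_iso ys xs"
  by (simp add: order_iso_def)

lemma order_iso_trans: "order_iso xs ys \<Longrightarrow> order_iso ys zs \<Longrightarrow> order_iso xs zs"
  by (simp add: order_iso_def)

lemma order_iso_length: "order_iso xs ys \<Longrightarrow> length xs = length ys"
  by (simp add: order_iso_def)

lemma nths_as_map: "nths xs I = map ((!) xs) (filter (\<lambda>i. i \<in> I) [0..<length xs])"
proof -
  have "zip xs [0..<length xs] = map (\<lambda>i. (xs!i, i)) [0..<length xs]"
    by (rule nth_equalityI) simp_all
  then show ?thesis unfolding nths_def by (simp add: filter_map comp_def)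
qed

lemma order_iso_map:
  assumes "\<And>j k. j \<in> set ks \<Longrightarrow> k \<in> set ks \<Longrightarrow> (f j < (f k::nat)) = (g j < (g k::nat))"
  shows "order_iso (map f ks) (map g ks)"
  unfolding order_iso_def using assms by (simp add: nth_mem)

lemma order_iso_nths: "order_iso xs ys \<Longrightarrow> order_iso (nths xs I) (nths ys I)"
  unfolding nths_as_map
  apply (frule order_iso_length)
  apply (simp)
  apply (rule order_iso_map)
  apply (auto simp: order_iso_def)
  done

lemma order_iso_subseq:
  assumes "order_iso xs ys" "subseq xs' xs"
  shows "\<exists>ys'. subseq ys' ys \<and> order_iso xs' ys'"
proof -
  from assms(2) obtain N where "xs' = nths xs N" by (auto simp: subseq_conv_nths)
  then show ?thesis using order_iso_nths[OF assms(1), of N]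
    by (auto simp: subseq_conv_nths)
qed

lemma contains_trans: "a \<preceq>\<^sub>p b \<Longrightarrow> b \<preceq>\<^sub>p c \<Longrightarrow> a \<preceq>\<^sub>p c"
  unfolding contains_subseq
  by (metis order_iso_subseq order_iso_trans subseq_order.order_trans)

lemma contains_iso_right: "a \<preceq>\<^sub>p b \<Longrightarrow> order_iso b c \<Longrightarrow> a \<preceq>\<^sub>p c"
  unfolding contains_subseq
  by (metis order_iso_subseq order_iso_trans)

lemma iso_contains: "order_iso a b \<Longrightarrow> a \<preceq>\<^sub>p b"
  unfolding contains_subseq by blast

lemma contains_refl: "a \<preceq>\<^sub>p a"
  by (rule iso_contains[OF order_iso_refl])

lemma contains_length: "a \<preceq>\<^sub>p b \<Longrightarrow> length a \<le> length b"
  unfolding contains_subseq by (metis list_emb_length order_iso_length)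

lemma order_iso_distinct: "order_iso x y \<Longrightarrow> distinct x \<Longrightarrow> distinct y"
  unfolding distinct_conv_nth
proof (intro allI impI)
  fix i j assume iso: "order_iso x y" and d: "\<forall>i<length x. \<forall>j<length x. i \<noteq> j \<longrightarrow> x ! i \<noteq> x ! j"
    and ij: "i < length y" "j < length y" "i \<noteq> j"
  have l: "length x = length y" using iso by (simp add: order_iso_def)
  have "x!i \<noteq> x!j" using d ij l by auto
  then have "x!i < x!j \<or> x!j < x!i" by auto
  then have "y!i < y!j \<or> y!j < y!i" using iso ij l unfolding order_iso_def by auto
  then show "y!i \<noteq> y!j" by auto
qed

lemma order_iso_sorted: "order_iso x y \<Longrightarrow> sorted x \<Longrightarrow> sorted y"
  unfolding sorted_iff_nth_mono
proof (intro allI impI)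
  fix i j assume iso: "order_iso x y" and s: "\<forall>i j. i \<le> j \<longrightarrow> j < length x \<longrightarrow> x ! i \<le> x ! j"
    and ij: "i \<le> j" "j < length y"
  have l: "length x = length y" using iso by (simp add: order_iso_def)
  have "\<not> x!j < x!i" using s ij l by (simp add: not_less)
  then have "\<not> y!j < y!i" using iso ij l unfolding order_iso_def by auto
  then show "y!i \<le> y!j" by simp
qed

lemma card_less_nth:
  assumes "distinct y" "j < length y"
  shows "card {k. k < length y \<and> y!k < y!j} = card {v \<in> set y. v < y!j}"
proof -
  have "{v \<in> set y. v < y!j} = (!) y ` {k. k < length y \<and> y!k < y!j}"
    by (auto simp: in_set_conv_nth)
  moreover have "inj_on ((!) y) {k. k < length y \<and> y!k < y!j}"
    using inj_on_nth[OF assms(1)] by auto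
  ultimately show ?thesis by (simp add: card_image)
qed

lemma rank_inj:
  fixes v w :: nat
  assumes "finite S" "v \<in> S" "w \<in> S" "card {u\<in>S. u < v} = card {u\<in>S. u < w}"
  shows "v = w"
proof (rule ccontr)
  assume "v \<noteq> w"
  then consider "v < w" | "w < v" by linarith
  then show False
  proof cases
    case 1
    have "v \<in> {u\<in>S. u < w}" "v \<notin> {u\<in>S. u < v}" using 1 assms by auto
    then have "{u\<in>S. u < v} \<subset> {u\<in>S. u < w}" using 1 by auto
    then have "card {u\<in>S. u < v} < card {u\<in>S. u < w}"
      by (rule psubset_card_mono[rotated]) (use assms in auto)
    then show False using assms by simp
  next
    case 2
    have "w \<in> {u\<in>S. u < v}" "w \<notin> {u\<in>S. u < w}" using 2 assms by auto
    then have "{u\<in>S. u < w} \<subset> {u\<in>S. u < v}" using 2 by auto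
    then have "card {u\<in>S. u < w} < card {u\<in>S. u < v}"
      by (rule psubset_card_mono[rotated]) (use assms in auto)
    then show False using assms by simp
  qed
qed

lemma iso_same_set_eq:
  assumes "order_iso y z" "distinct y" "distinct z" "set y = set z"
  shows "y = z"
proof (rule nth_equalityI)
  show len: "length y = length z" using assms(1) by (rule order_iso_length)
  fix j assume j: "j < length y"
  have H: "\<forall>j<length y. \<forall>k<length y. (y!j < y!k) = (z!j < z!k)"
    using assms(1) unfolding order_iso_def by simp
  have "card {v \<in> set y. v < y!j} = card {k. k < length y \<and> y!k < y!j}"
    using card_less_nth[OF assms(2) j] by simp
  also have "{k. k < length y \<and> y!k < y!j} = {k. k < length z \<and> z!k < z!j}"
  proof (rule Collect_cong)
    fix k show "(k < length y \<and> y!k < y!j) = (k < length z \<and> z!k < z!j)"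
      using H j len by (cases "k < length y") auto
  qed
  also have "card \<dots> = card {v \<in> set z. v < z!j}"
    using card_less_nth[OF assms(3)] j len by simp
  finally have eq0: "card {v \<in> set y. v < y!j} = card {v \<in> set z. v < z!j}" .
  have eq: "card {v \<in> set y. v < y!j} = card {v \<in> set y. v < z!j}"
    using eq0 assms(4) by (simp only:)
  have zj: "z!j \<in> set z" using j len by simp
  have "y!j \<in> set y" "z!j \<in> set y" using j apply simp using zj assms(4) by (simp only:)
  then show "y!j = z!j"
    using rank_inj[of "set y" "y!j" "z!j", OF _ _ _ eq] by simp
qed

lemma perm_iso_eq: "is_perm p \<Longrightarrow> is_perm q \<Longrightarrow> order_iso p q \<Longrightarrow> p = q"
  unfolding is_perm_def
  by (metis iso_same_set_eq order_iso_length)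

lemma std_exists:
  fixes y :: "nat list"
  assumes "distinct y"
  shows "\<exists>x. is_perm x \<and> order_iso x y"
proof -
  define r where "r v = card {u \<in> set y. u \<le> v}" for v
  define x where "x = map r y"
  have mono: "r v < r w \<longleftrightarrow> v < w" if "v \<in> set y" "w \<in> set y" for v w
  proof
    assume "v < w"
    have w1: "w \<in> {u \<in> set y. u \<le> w}" "w \<notin> {u \<in> set y. u \<le> v}" using that \<open>v < w\<close> by auto
    have "{u \<in> set y. u \<le> v} \<subset> {u \<in> set y. u \<le> w}"
    proof (rule psubsetI)
      show "{u \<in> set y. u \<le> v} \<subseteq> {u \<in> set y. u \<le> w}" using \<open>v < w\<close> by auto
      show "{u \<in> set y. u \<le> v} \<noteq> {u \<in> set y. u \<le> w}" using w1 by blast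
    qed
    then show "r v < r w" unfolding r_def by (rule psubset_card_mono[rotated]) auto
  next
    assume "r v < r w"
    show "v < w"
    proof (rule ccontr)
      assume "\<not> v < w"
      then have "{u \<in> set y. u \<le> w} \<subseteq> {u \<in> set y. u \<le> v}" by auto
      then have "r w \<le> r v" unfolding r_def by (rule card_mono[rotated]) auto
      then show False using \<open>r v < r w\<close> by simp
    qed
  qed
  have iso: "order_iso x y"
    unfolding x_def order_iso_def using mono by (auto simp: nth_mem)
  have dist: "distinct x" using order_iso_distinct[OF order_iso_sym[OF iso] assms] .
  have sub: "set x \<subseteq> {1..length x}"
  proof
    fix a assume "a \<in> set x"
    then obtain v where v: "v \<in> set y" "a = r v" unfolding x_def by auto
    have "v \<in> {u \<in> set y. u \<le> v}" using v by auto
    then have "0 < r v" unfolding r_def by (subst card_gt_0_iff) auto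
    then have "1 \<le> r v" by simp
    moreover have "r v \<le> card (set y)" unfolding r_def by (rule card_mono) auto
    ultimately show "a \<in> {1..length x}" using v distinct_card[OF assms] by (simp add: x_def)
  qed
  have "set x = {1..length x}"
    using card_subset_eq[OF _ sub] distinct_card[OF dist] by simp
  then show ?thesis using dist iso unfolding is_perm_def by blast
qed



definition blk :: "(nat \<Rightarrow> bool) \<Rightarrow> nat list \<Rightarrow> nat list" where
  "blk c xs = filter c xs @ filter (\<lambda>x. \<not> c x) xs"

lemma length_blk[simp]: "length (blk c xs) = length xs"
  unfolding blk_def by (simp add: sum_length_filter_compl)

lemma set_blk[simp]: "set (blk c xs) = set xs"
  unfolding blk_def by auto

lemma distinct_blk: "distinct xs \<Longrightarrow> distinct (blk c xs)"
  unfolding blk_def by auto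

lemma is_perm_blk: "is_perm (blk q [1..<m+1])"
  unfolding is_perm_def by (auto simp: distinct_blk)

lemma sum_subseqs_append:
  fixes g :: "'a list \<Rightarrow> 'b::comm_monoid_add"
  shows "sum_list (map g (subseqs (xs @ ys))) =
    sum_list (map (\<lambda>as. sum_list (map (\<lambda>bs. g (as @ bs)) (subseqs ys))) (subseqs xs))"
proof (induction xs arbitrary: g)
  case Nil
  then show ?case by simp
next
  case (Cons x xs)
  have "sum_list (map g (subseqs ((x # xs) @ ys))) =
     sum_list (map (\<lambda>zs. g (x # zs)) (subseqs (xs @ ys))) + sum_list (map g (subseqs (xs @ ys)))"
    by (simp add: Let_def comp_def)
  also have "\<dots> = sum_list (map (\<lambda>as. sum_list (map (\<lambda>bs. g (x # as @ bs)) (subseqs ys))) (subseqs xs))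
     + sum_list (map (\<lambda>as. sum_list (map (\<lambda>bs. g (as @ bs)) (subseqs ys))) (subseqs xs))"
    using Cons.IH[of "\<lambda>zs. g (x # zs)"] Cons.IH[of g] by simp
  also have "\<dots> = sum_list (map (\<lambda>as. sum_list (map (\<lambda>bs. g (as @ bs)) (subseqs ys))) (subseqs (x # xs)))"
    by (simp add: Let_def comp_def)
  finally show ?case .
qed

lemma sum_subseqs_split:
  fixes g :: "'a list \<Rightarrow> 'a list \<Rightarrow> 'b::comm_monoid_add"
  shows "sum_list (map (\<lambda>ws. g (filter c ws) (filter (\<lambda>x. \<not> c x) ws)) (subseqs vs)) =
    sum_list (map (\<lambda>as. sum_list (map (\<lambda>bs. g as bs) (subseqs (filter (\<lambda>x. \<not> c x) vs))))
      (subseqs (filter c vs)))"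
proof (induction vs arbitrary: g)
  case Nil
  then show ?case by simp
next
  case (Cons v vs)
  show ?case
  proof (cases "c v")
    case True
    have "sum_list (map (\<lambda>ws. g (filter c ws) (filter (\<lambda>x. \<not> c x) ws)) (subseqs (v # vs))) =
      sum_list (map (\<lambda>ws. g (v # filter c ws) (filter (\<lambda>x. \<not> c x) ws)) (subseqs vs)) +
      sum_list (map (\<lambda>ws. g (filter c ws) (filter (\<lambda>x. \<not> c x) ws)) (subseqs vs))"
      using True by (simp add: Let_def comp_def)
    also have "\<dots> = sum_list (map (\<lambda>as. sum_list (map (\<lambda>bs. g as bs) (subseqs (filter (\<lambda>x. \<not> c x) (v # vs)))))
      (subseqs (filter c (v # vs))))"
      using True Cons.IH[of "\<lambda>as bs. g (v # as) bs"] Cons.IH[of g] by (simp add: Let_def comp_def)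
    finally show ?thesis .
  next
    case False
    have "sum_list (map (\<lambda>ws. g (filter c ws) (filter (\<lambda>x. \<not> c x) ws)) (subseqs (v # vs))) =
      sum_list (map (\<lambda>ws. g (filter c ws) (v # filter (\<lambda>x. \<not> c x) ws)) (subseqs vs)) +
      sum_list (map (\<lambda>ws. g (filter c ws) (filter (\<lambda>x. \<not> c x) ws)) (subseqs vs))"
      using False by (simp add: Let_def comp_def)
    also have "\<dots> = sum_list (map (\<lambda>as. sum_list (map (\<lambda>bs. g as (v # bs)) (subseqs (filter (\<lambda>x. \<not> c x) vs))))
      (subseqs (filter c vs))) +
      sum_list (map (\<lambda>as. sum_list (map (\<lambda>bs. g as bs) (subseqs (filter (\<lambda>x. \<not> c x) vs))))
      (subseqs (filter c vs)))"
      using Cons.IH[of "\<lambda>as bs. g as (v # bs)"] Cons.IH[of g] by simp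
    also have "\<dots> = sum_list (map (\<lambda>as. sum_list (map (\<lambda>bs. g as bs) (subseqs (filter (\<lambda>x. \<not> c x) (v # vs)))))
      (subseqs (filter c (v # vs))))"
      using False by (simp add: Let_def comp_def sum_list_addf[symmetric])
    finally show ?thesis .
  qed
qed

lemma sum_subseqs_blk:
  fixes g :: "nat list \<Rightarrow> 'b::comm_monoid_add"
  shows "sum_list (map g (subseqs (blk c vs))) = sum_list (map (\<lambda>ws. g (blk c ws)) (subseqs vs))"
  unfolding blk_def sum_subseqs_append
  using sum_subseqs_split[of "\<lambda>as bs. g (as @ bs)" c vs] by simp

lemma subseqs_map: "subseqs (map f xs) = map (map f) (subseqs xs)"
  by (induction xs) (simp_all add: Let_def comp_def)

lemma subseq_merge:
  assumes "subseq A (filter c ws)" "subseq B (filter (\<lambda>x. \<not> c x) ws)"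
  shows "\<exists>us. subseq us ws \<and> filter c us = A \<and> filter (\<lambda>x. \<not> c x) us = B"
  using assms
proof (induction ws arbitrary: A B)
  case Nil
  then show ?case using list_emb_Nil2 by fastforce
next
  case (Cons w ws)
  show ?case
  proof (cases "c w")
    case True
    then have B: "subseq B (filter (\<lambda>x. \<not> c x) ws)" using Cons.prems by simp
    have "subseq A (w # filter c ws)" using Cons.prems True by simp
    then consider (skip) "subseq A (filter c ws)" | (take) A' where "A = w # A'" "subseq A' (filter c ws)"
      by (cases A) (auto split: if_splits)
    then show ?thesis
    proof cases
      case skip
      then obtain us where "subseq us ws" "filter c us = A" "filter (\<lambda>x. \<not> c x) us = B"
        using Cons.IH B by blast
      then show ?thesis by (intro exI[of _ us]) auto
    next
      case take
      then obtain us where "subseq us ws" "filter c us = A'" "filter (\<lambda>x. \<not> c x) us = B"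
        using Cons.IH B by blast
      then show ?thesis using True take by (intro exI[of _ "w # us"]) auto
    qed
  next
    case False
    then have A: "subseq A (filter c ws)" using Cons.prems by simp
    have "subseq B (w # filter (\<lambda>x. \<not> c x) ws)" using Cons.prems False by simp
    then consider (skip) "subseq B (filter (\<lambda>x. \<not> c x) ws)" | (take) B' where "B = w # B'" "subseq B' (filter (\<lambda>x. \<not> c x) ws)"
      by (cases B) (auto split: if_splits)
    then show ?thesis
    proof cases
      case skip
      then obtain us where "subseq us ws" "filter c us = A" "filter (\<lambda>x. \<not> c x) us = B"
        using Cons.IH A by blast
      then show ?thesis by (intro exI[of _ us]) auto
    next
      case take
      then obtain us where "subseq us ws" "filter c us = A" "filter (\<lambda>x. \<not> c x) us = B'"
        using Cons.IH A by blast
      then show ?thesis using False take by (intro exI[of _ "w # us"]) auto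
    qed
  qed
qed

lemma subseq_blk:
  assumes "subseq ys (blk c ws)"
  shows "\<exists>us. subseq us ws \<and> ys = blk c us"
proof -
  from assms obtain A B where "ys = A @ B" "subseq A (filter c ws)" "subseq B (filter (\<lambda>x. \<not> c x) ws)"
    unfolding blk_def by (auto elim: subseq_appendE)
  then show ?thesis using subseq_merge[of A c ws B] unfolding blk_def by auto
qed

lemma subseq_blk_mono: "subseq us ws \<Longrightarrow> subseq (blk c us) (blk c ws)"
  unfolding blk_def by (intro list_emb_append_mono subseq_filter)

lemma subseq_sorted_wrt: "subseq xs ys \<Longrightarrow> sorted_wrt P ys \<Longrightarrow> sorted_wrt P xs"
  by (induction rule: list_emb.induct) (auto dest: list_emb_set)

lemma subseq_map_ex:
  "subseq u (map f ws) \<Longrightarrow> \<exists>us. subseq us ws \<and> u = map f us"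
proof (induction ws arbitrary: u)
  case Nil
  then show ?case by auto
next
  case (Cons w ws)
  show ?case
  proof (cases u)
    case Nil
    then show ?thesis by (intro exI[of _ "[]"]) auto
  next
    case (Cons y u')
    show ?thesis
    proof (cases "y = f w \<and> subseq u' (map f ws)")
      case True
      then obtain us where "subseq us ws" "u' = map f us" using Cons.IH by blast
      then show ?thesis using True Cons by (intro exI[of _ "w # us"]) auto
    next
      case False
      then have "subseq u (map f ws)" using Cons.prems Cons by (auto split: if_splits)
      then obtain us where "subseq us ws" "u = map f us" using Cons.IH by blast
      then show ?thesis by (intro exI[of _ us]) auto
    qed
  qed
qed

lemma decomp_unique:
  fixes A B A' B' :: "nat list"
  assumes "sorted A" "sorted B" "sorted A'" "sorted B'" "A @ B = A' @ B'" "\<not> sorted (A @ B)"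
  shows "A = A'"
proof -
  from assms(5) obtain us where
    us: "(A = A' @ us \<and> us @ B = B') \<or> (A @ us = A' \<and> B = us @ B')"
    by (auto simp: append_eq_append_conv2)
  show ?thesis
  proof (cases "us = []")
    case True
    then show ?thesis using us by auto
  next
    case False
    then obtain u where u: "u \<in> set us" by (cases us) auto
    from us show ?thesis
    proof
      assume h: "A = A' @ us \<and> us @ B = B'"
      have s1: "sorted (A' @ us)" "sorted (us @ B)" using assms(1,4) h by auto
      have f: "sorted A'" "sorted us" "sorted B" "\<forall>x\<in>set A'. \<forall>y\<in>set us. x \<le> y"
        "\<forall>x\<in>set us. \<forall>y\<in>set B. x \<le> y" using s1 by (simp_all add: sorted_append)
      have "\<forall>x\<in>set A'. \<forall>y\<in>set B. x \<le> y" using f(4,5) u by (meson order_trans)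
      then have "sorted (A' @ us @ B)"
        using f by (auto simp add: sorted_append)
      then show ?thesis using assms(6) h by simp
    next
      assume h: "A @ us = A' \<and> B = us @ B'"
      have s1: "sorted (A @ us)" "sorted (us @ B')" using assms(2,3) h by auto
      have f: "sorted A" "sorted us" "sorted B'" "\<forall>x\<in>set A. \<forall>y\<in>set us. x \<le> y"
        "\<forall>x\<in>set us. \<forall>y\<in>set B'. x \<le> y" using s1 by (simp_all add: sorted_append)
      have "\<forall>x\<in>set A. \<forall>y\<in>set B'. x \<le> y" using f(4,5) u by (meson order_trans)
      then have "sorted (A @ us @ B')"
        using f by (auto simp add: sorted_append)
      then show ?thesis using assms(6) h by simp
    qed
  qed
qed

lemma iso_map_mono:
  fixes h :: "nat \<Rightarrow> nat"
  assumes "\<And>x y. x \<in> set xs \<Longrightarrow> y \<in> set xs \<Longrightarrow> x < y \<Longrightarrow> h x < h y"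
  shows "order_iso xs (map h xs)"
  unfolding order_iso_def
proof (intro conjI allI impI)
  fix j k assume jk: "j < length xs" "k < length xs"
  then have m: "xs!j \<in> set xs" "xs!k \<in> set xs" by auto
  show "(xs!j < xs!k) = (map h xs ! j < map h xs ! k)"
  proof
    assume "xs!j < xs!k" then show "map h xs ! j < map h xs ! k" using assms m jk by simp
  next
    assume a: "map h xs ! j < map h xs ! k"
    show "xs!j < xs!k"
    proof (rule ccontr)
      assume "\<not> xs!j < xs!k"
      then have "xs!k < xs!j \<or> xs!k = xs!j" by auto
      then have "h (xs!k) < h (xs!j) \<or> h (xs!k) = h (xs!j)" using assms m by auto
      then show False using a jk by auto
    qed
  qed
qed simp



lemma sorted_wrt_upt_less: "sorted_wrt (<) [a..<b]"
  by (simp add: sorted_wrt_iff_nth_less)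

lemma sorted_filter_upt: "sorted (filter P [a..<b])"
  by (simp add: sorted_wrt_filter)

lemma blk_map_sorted:
  assumes "sorted_wrt (<) ws" "length ws = m"
  shows "blk c ws = map (\<lambda>k. ws!(k-1)) (blk (\<lambda>k. c (ws!(k-1))) [1..<m+1])"
    and "order_iso (blk (\<lambda>k. c (ws!(k-1))) [1..<m+1]) (blk c ws)"
proof -
  define h where "h = (\<lambda>k. ws!(k-1))"
  have ws: "ws = map h [1..<m+1]"
    by (rule nth_equalityI) (simp_all add: h_def assms(2) del: upt_Suc)
  have eq: "blk c ws = map h (blk (\<lambda>k. c (h k)) [1..<m+1])"
    by (subst ws) (simp add: blk_def filter_map comp_def)
  then show "blk c ws = map (\<lambda>k. ws!(k-1)) (blk (\<lambda>k. c (ws!(k-1))) [1..<m+1])"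
    by (simp add: h_def)
  have "order_iso (blk (\<lambda>k. c (h k)) [1..<m+1]) (map h (blk (\<lambda>k. c (h k)) [1..<m+1]))"
  proof (rule iso_map_mono)
    fix x y assume xy: "x \<in> set (blk (\<lambda>k. c (h k)) [1..<m+1])" "y \<in> set (blk (\<lambda>k. c (h k)) [1..<m+1])" "x < y"
    then have "x - 1 < y - 1" "y - 1 < length ws" using assms(2) by auto
    then show "h x < h y" using assms(1) unfolding h_def sorted_wrt_iff_nth_less by blast
  qed
  then show "order_iso (blk (\<lambda>k. c (ws!(k-1))) [1..<m+1]) (blk c ws)"
    using eq by (simp add: h_def)
qed

lemma filter_eq_agree:
  assumes "filter P xs = filter Q xs" "x \<in> set xs"
  shows "P x = Q x"
proof -
  have "x \<in> set (filter P xs) \<longleftrightarrow> x \<in> set (filter Q xs)" using assms(1) by simp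
  then show ?thesis using assms(2) by simp
qed

lemma core_iso:
  assumes a: "a = blk q [1..<m+1]" and ns: "\<not> sorted a" and ws: "sorted_wrt (<) ws"
  shows "order_iso a (blk c ws) \<longleftrightarrow> map q [1..<m+1] = map c ws"
proof
  assume iso: "order_iso a (blk c ws)"
  have len: "length ws = m" using order_iso_length[OF iso] a by (simp del: upt_Suc)
  define h where "h = (\<lambda>k. ws!(k-1))"
  have iso2: "order_iso (blk (\<lambda>k. c (h k)) [1..<m+1]) (blk c ws)"
    using blk_map_sorted(2)[OF ws len] by (simp add: h_def)
  have "a = blk (\<lambda>k. c (h k)) [1..<m+1]"
    using perm_iso_eq[OF _ is_perm_blk order_iso_trans[OF iso order_iso_sym[OF iso2]]] a is_perm_blk
    by simp
  then have "filter q [1..<m+1] = filter (\<lambda>k. c (h k)) [1..<m+1]"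
    using decomp_unique[OF sorted_filter_upt sorted_filter_upt sorted_filter_upt sorted_filter_upt]
      ns a unfolding blk_def by metis
  then have agree: "\<forall>k\<in>set [1..<m+1]. q k = c (h k)" using filter_eq_agree by metis
  have wsm: "ws = map h [1..<m+1]"
    by (rule nth_equalityI) (simp_all add: h_def len del: upt_Suc)
  show "map q [1..<m+1] = map c ws"
    using agree by (subst wsm) simp
next
  assume eq: "map q [1..<m+1] = map c ws"
  have len: "length ws = m" using arg_cong[OF eq, of length] by (simp del: upt_Suc)
  define h where "h = (\<lambda>k. ws!(k-1))"
  have wsm: "ws = map h [1..<m+1]"
    by (rule nth_equalityI) (simp_all add: h_def len del: upt_Suc)
  have "map q [1..<m+1] = map (\<lambda>k. c (h k)) [1..<m+1]" using eq wsm by simp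
  then have agree: "\<forall>k\<in>set [1..<m+1]. q k = c (h k)" by (simp add: map_eq_conv)
  have "blk (\<lambda>k. c (h k)) [1..<m+1] = a"
    unfolding a blk_def
  proof -
    have "filter (\<lambda>k. c (h k)) [1..<m+1] = filter q [1..<m+1]"
      by (rule filter_cong) (use agree in auto)
    moreover have "filter (\<lambda>k. \<not> c (h k)) [1..<m+1] = filter (\<lambda>k. \<not> q k) [1..<m+1]"
      by (rule filter_cong) (use agree in auto)
    ultimately show "filter (\<lambda>k. c (h k)) [1..<m + 1] @ filter (\<lambda>x. \<not> c (h x)) [1..<m + 1] =
      filter q [1..<m + 1] @ filter (\<lambda>x. \<not> q x) [1..<m + 1]" by simp
  qed
  moreover have "order_iso (blk (\<lambda>k. c (h k)) [1..<m+1]) (blk c ws)"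
    using blk_map_sorted(2)[OF ws len, of c] by (simp only: h_def)
  ultimately show "order_iso a (blk c ws)" by simp
qed

lemma contains_blk:
  assumes a: "a = blk q [1..<m+1]" and ns: "\<not> sorted a" and ws: "sorted_wrt (<) ws"
  shows "a \<preceq>\<^sub>p blk c ws \<longleftrightarrow> subseq (map q [1..<m+1]) (map c ws)"
proof
  assume "a \<preceq>\<^sub>p blk c ws"
  then obtain ys where ys: "subseq ys (blk c ws)" "order_iso a ys" by (auto simp: contains_subseq)
  then obtain us where us: "subseq us ws" "ys = blk c us" using subseq_blk by blast
  have "sorted_wrt (<) us" using subseq_sorted_wrt[OF us(1) ws] .
  then have "map q [1..<m+1] = map c us" using core_iso[OF a ns] ys us by blast
  then show "subseq (map q [1..<m+1]) (map c ws)" using subseq_map[OF us(1)] by simp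
next
  assume "subseq (map q [1..<m+1]) (map c ws)"
  then obtain us where us: "subseq us ws" "map q [1..<m+1] = map c us" using subseq_map_ex by blast
  have "sorted_wrt (<) us" using subseq_sorted_wrt[OF us(1) ws] .
  then have "order_iso a (blk c us)" using core_iso[OF a ns] us by blast
  then show "a \<preceq>\<^sub>p blk c ws" using subseq_blk_mono[OF us(1)] unfolding contains_subseq by blast
qed

lemma struct_below:
  assumes "is_perm a" "a \<preceq>\<^sub>p blk c [1..<n+1]"
  shows "\<exists>q. a = blk q [1..<length a+1]"
proof -
  obtain ys where ys: "subseq ys (blk c [1..<n+1])" "order_iso a ys"
    using assms(2) by (auto simp: contains_subseq)
  then obtain us where us: "subseq us [1..<n+1]" "ys = blk c us" using subseq_blk by blast
  have s: "sorted_wrt (<) us" using subseq_sorted_wrt[OF us(1) sorted_wrt_upt_less] .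
  have len: "length us = length a" using order_iso_length[OF ys(2)] us by simp
  have i1: "order_iso a (blk c us)" using ys(2) us(2) by simp
  have "order_iso a (blk (\<lambda>k. c (us!(k-1))) [1..<length a+1])"
    using order_iso_trans[OF i1 order_iso_sym[OF blk_map_sorted(2)[OF s len, of c]]] .
  then have "a = blk (\<lambda>k. c (us!(k-1))) [1..<length a+1]"
    using perm_iso_eq[OF assms(1) is_perm_blk] by simp
  then show ?thesis by blast
qed

lemma contains_not_sorted: "s \<preceq>\<^sub>p a \<Longrightarrow> \<not> sorted s \<Longrightarrow> \<not> sorted a"
  unfolding contains_subseq
  by (metis order_iso_sorted order_iso_sym subseq_sorted_wrt)



fun alt :: "bool \<Rightarrow> nat \<Rightarrow> bool list" where
  "alt x 0 = []"
| "alt x (Suc n) = x # alt (\<not> x) n"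

lemma map_alt:
  assumes "\<forall>j. c (Suc j) = (\<not> c j)"
  shows "map c [k..<k+n] = alt (c k) n"
proof (induction n arbitrary: k)
  case 0
  then show ?case by simp
next
  case (Suc n)
  have "[k..<k + Suc n] = k # [Suc k..<Suc k + n]" by (simp add: upt_conv_Cons)
  then show ?case using Suc.IH[of "Suc k"] assms by simp
qed

lemma alt_hd: "alt x n = y # v \<Longrightarrow> y = x"
  by (cases n) auto

lemma sum_list_neg: "sum_list (map (\<lambda>x. - f x) xs) = - sum_list (map f xs :: int list)"
  by (induction xs) auto

lemma Nsum:
  "sum_list (map (\<lambda>bs. if subseq u bs then (-1::int)^length bs else 0) (subseqs (alt x n)))
     = (if u = alt x n then (-1)^n else 0)"
proof (induction n arbitrary: u x)
  case 0
  then show ?case by (auto dest: list_emb_Nil2)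
next
  case (Suc n)
  define S where "S = subseqs (alt (\<not> x) n)"
  define N where "N v = sum_list (map (\<lambda>bs. if subseq v bs then (-1::int)^length bs else 0) S)" for v
  have IH: "N v = (if v = alt (\<not> x) n then (-1)^n else 0)" for v
    unfolding N_def S_def by (rule Suc.IH)
  have split: "sum_list (map (\<lambda>bs. if subseq u bs then (-1::int)^length bs else 0) (subseqs (alt x (Suc n))))
    = sum_list (map (\<lambda>bs. if subseq u (x # bs) then (-1::int)^length (x # bs) else 0) S) + N u"
    unfolding S_def N_def by (simp add: Let_def comp_def)
  show ?case
  proof (cases u)
    case Nil
    have "sum_list (map (\<lambda>bs. if subseq u (x # bs) then (-1::int)^length (x # bs) else 0) S) = - N u"
      unfolding N_def using Nil by (simp add: sum_list_neg[symmetric])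
    then show ?thesis using split Nil by simp
  next
    case (Cons y u')
    show ?thesis
    proof (cases "y = x")
      case True
      have "sum_list (map (\<lambda>bs. if subseq u (x # bs) then (-1::int)^length (x # bs) else 0) S) = - N u'"
        unfolding N_def using Cons True by (simp add: sum_list_neg[symmetric] if_distrib cong: if_cong)
      moreover have "N u = 0" using IH[of u] Cons True alt_hd[of "\<not> x" n x u'] by auto
      ultimately show ?thesis using split Cons True IH[of u'] by auto
    next
      case False
      have "sum_list (map (\<lambda>bs. if subseq u (x # bs) then (-1::int)^length (x # bs) else 0) S) = - N u"
        unfolding N_def using Cons False by (simp add: sum_list_neg[symmetric] if_distrib cong: if_cong)
      then show ?thesis using split Cons False by simp
    qed
  qed
qed

definition Cnt :: "bool list \<Rightarrow> bool list \<Rightarrow> nat" where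
  "Cnt u w = sum_list (map (\<lambda>bs. if bs = u then 1 else 0) (subseqs w))"

lemma Cnt_Nil_right: "Cnt u [] = (if u = [] then 1 else 0)"
  by (simp add: Cnt_def)

lemma Cnt_Cons_right: "Cnt u (x # w) = (case u of [] \<Rightarrow> 0 | y # u' \<Rightarrow> (if y = x then Cnt u' w else 0)) + Cnt u w"
  by (cases u) (simp_all add: Cnt_def Let_def comp_def)

lemma Cnt_Nil_left: "Cnt [] w = 1"
  by (induction w) (simp_all add: Cnt_Nil_right Cnt_Cons_right)

fun adjw :: "bool list \<Rightarrow> nat" where
  "adjw (x # y # xs) = (if x = y then 1 else 0) + adjw (y # xs)"
| "adjw _ = 0"

lemma adjw_le: "adjw u \<le> length u - 1"
  by (induction u rule: adjw.induct) auto

lemma adjw_Cons: "adjw (x # L) = (if L \<noteq> [] \<and> hd L = x then 1 else 0) + adjw L"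
  by (cases L) auto

lemma cnt_alt:
  "u \<noteq> [] \<Longrightarrow> Cnt u (alt x n) =
     ((n + length u - adjw u - (if hd u = x then 0 else 1)) div 2) choose (length u)"
proof (induction n arbitrary: u x)
  case 0
  have "(length u - adjw u - (if hd u = x then 0 else 1)) div 2 < length u"
    using 0 by (cases u) auto
  then show ?case using 0 by (simp add: Cnt_Nil_right)
next
  case (Suc n)
  obtain y u' where u: "u = y # u'" using Suc.prems by (cases u) auto
  have rec: "Cnt u (alt x (Suc n)) = (if y = x then Cnt u' (alt (\<not> x) n) else 0) + Cnt u (alt (\<not> x) n)"
    using u by (simp add: Cnt_Cons_right)
  show ?case
  proof (cases "y = x")
    case False
    have "Cnt u (alt (\<not> x) n) = ((n + length u - adjw u) div 2) choose (length u)"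
      using Suc.IH[of u "\<not> x"] Suc.prems u False by simp
    moreover have "Suc n + length u - adjw u - 1 = n + length u - adjw u"
      by simp
    ultimately show ?thesis using rec False u by simp
  next
    case True
    show ?thesis
    proof (cases u')
      case Nil
      have "Cnt u (alt (\<not> x) n) = n div 2"
        using Suc.IH[of u "\<not> x"] u Nil True by simp
      then show ?thesis using rec True u Nil by (simp add: Cnt_Nil_left)
    next
      case (Cons z u'')
      define m' where "m' = length u'"
      define K where "K = n + m' - adjw u"
      have au: "adjw u = (if y = z then 1 else 0) + adjw u'" using u Cons by simp
      have le: "adjw u' \<le> m' - 1" unfolding m'_def by (rule adjw_le)
      have m'pos: "m' \<ge> 1" using Cons m'_def by simp
      have c1: "Cnt u' (alt (\<not> x) n) = (K div 2) choose m'"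
      proof -
        have "Cnt u' (alt (\<not> x) n) = ((n + m' - adjw u' - (if z = (\<not> x) then 0 else 1)) div 2) choose m'"
          using Suc.IH[of u' "\<not> x"] Cons m'_def by simp
        moreover have "n + m' - adjw u' - (if z = (\<not> x) then 0 else 1) = K"
          unfolding K_def using au True by auto
        ultimately show ?thesis by simp
      qed
      have c2: "Cnt u (alt (\<not> x) n) = (K div 2) choose (Suc m')"
      proof -
        have "Cnt u (alt (\<not> x) n) = ((n + Suc m' - adjw u - 1) div 2) choose (Suc m')"
          using Suc.IH[of u "\<not> x"] u True m'_def by simp
        moreover have "n + Suc m' - adjw u - 1 = K" unfolding K_def by simp
        ultimately show ?thesis by simp
      qed
      have "adjw u \<le> m'" using au le m'pos by auto
      then have "(Suc n + length u - adjw u - 0) div 2 = Suc (K div 2)"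
        unfolding K_def using u m'_def by simp
      then show ?thesis using rec True c1 c2 u m'_def by simp
    qed
  qed
qed



lemma descent_pos:
  assumes "d \<in> descents (A @ B)" "sorted_wrt (<) A" "sorted_wrt (<) B"
  shows "Suc d = length A"
proof -
  have d: "Suc d < length A + length B" "(A @ B) ! d > (A @ B) ! Suc d"
    using assms(1) unfolding descents_def by auto
  show ?thesis
  proof (rule ccontr)
    assume ne: "Suc d \<noteq> length A"
    show False
    proof (cases "Suc d < length A")
      case True
      then have "A ! d < A ! Suc d" using assms(2) unfolding sorted_wrt_iff_nth_less by auto
      then show False using d True by (simp add: nth_append)
    next
      case False
      then have ge: "d \<ge> length A" using ne by simp
      then have "B ! (d - length A) < B ! (Suc d - length A)"
        using assms(3) d(1) unfolding sorted_wrt_iff_nth_less by auto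
      then show False using d ge by (simp add: nth_append Suc_diff_le)
    qed
  qed
qed

lemma one_descent_not_sorted:
  assumes "card (descents xs) = 1" shows "\<not> sorted xs"
proof
  assume s: "sorted xs"
  obtain d where "descents xs = {d}" using assms card_1_singletonE by blast
  then have "Suc d < length xs" "xs ! d > xs ! Suc d" unfolding descents_def by auto
  then show False using s unfolding sorted_iff_nth_mono by (meson Suc_n_not_le_n le_SucI not_le order_refl)
qed

lemma sorted_wrt_filter_upt: "sorted_wrt (<) (filter P [a..<b])"
  by (simp add: sorted_wrt_filter sorted_wrt_upt_less)

lemma obd_blk:
  assumes c1: "card (descents a) = 1" and a: "a = blk q [1..<m+1]"
  shows "one_before_descent a \<longleftrightarrow> q 1"
proof -
  define A where "A = filter q [1..<m+1]"
  define B where "B = filter (\<lambda>x. \<not> q x) [1..<m+1]"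
  have aAB: "a = A @ B" unfolding a blk_def A_def B_def by simp
  obtain d where dd: "descents a = {d}" using c1 card_1_singletonE by blast
  have pos: "\<And>d'. d' \<in> descents a \<Longrightarrow> Suc d' = length A"
    using descent_pos aAB sorted_wrt_filter_upt unfolding A_def B_def by metis
  have d1: "Suc d < length a" using dd unfolding descents_def by auto
  have key: "\<And>j. j < length a \<Longrightarrow> a ! j = 1 \<Longrightarrow> (j < length A \<longleftrightarrow> q 1)"
  proof -
    fix j assume j: "j < length a" "a ! j = 1"
    show "j < length A \<longleftrightarrow> q 1"
    proof
      assume jA: "j < length A"
      then have "a ! j = A ! j" using aAB by (simp add: nth_append)
      then have "a ! j \<in> set A" using jA by simp
      then show "q 1" using j unfolding A_def by simp
    next
      assume "q 1"
      show "j < length A"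
      proof (rule ccontr)
        assume nj: "\<not> j < length A"
        have jl: "j - length A < length B" using j aAB nj by simp
        have "a ! j = B ! (j - length A)" using aAB nj by (simp add: nth_append)
        then have "a ! j \<in> set B" using jl by simp
        then show False using j \<open>q 1\<close> unfolding B_def by simp
      qed
    qed
  qed
  have m1: "1 \<in> set a" using d1 a by (simp del: upt_Suc)
  then obtain j where j: "j < length a" "a ! j = 1" by (auto simp: in_set_conv_nth)
  show ?thesis
  proof
    assume "one_before_descent a"
    then have "j \<le> d" using j dd unfolding one_before_descent_def by auto
    then have "j < length A" using pos[of d] dd by simp
    then show "q 1" using key j by blast
  next
    assume q1: "q 1"
    show "one_before_descent a"
      unfolding one_before_descent_def
    proof (intro ballI allI impI)
      fix d' j' assume "d' \<in> descents a" "j' < length a" "a ! j' = 1"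
      then show "j' \<le> d'" using key[of j'] pos[of d'] q1 by simp
    qed
  qed
qed

fun adjr :: "nat list \<Rightarrow> nat" where
  "adjr (x # y # xs) = (if y = Suc x then 1 else 0) + adjr (y # xs)"
| "adjr _ = 0"

lemma adj_set_Cons:
  assumes "zs \<noteq> []"
  shows "{j. Suc j < length (z # zs) \<and> (z # zs) ! Suc j = (z # zs) ! j + 1} =
    (if hd zs = Suc z then {0} else {}) \<union> Suc ` {j. Suc j < length zs \<and> zs ! Suc j = zs ! j + 1}"
proof (rule set_eqI)
  fix j
  show "j \<in> {j. Suc j < length (z # zs) \<and> (z # zs) ! Suc j = (z # zs) ! j + 1} \<longleftrightarrow>
    j \<in> (if hd zs = Suc z then {0} else {}) \<union> Suc ` {j. Suc j < length zs \<and> zs ! Suc j = zs ! j + 1}"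
    using assms by (cases j) (auto simp: hd_conv_nth)
qed

lemma adjacencies_adjr: "adjacencies xs = adjr xs"
proof (induction xs rule: adjr.induct)
  case (1 x y xs)
  have "adjacencies (x # y # xs) =
    card ((if y = Suc x then {0} else {}) \<union> Suc ` {j. Suc j < length (y # xs) \<and> (y # xs) ! Suc j = (y # xs) ! j + 1})"
    unfolding adjacencies_def using adj_set_Cons[of "y # xs" x] by simp
  also have "\<dots> = (if y = Suc x then 1 else 0) + adjacencies (y # xs)"
    unfolding adjacencies_def by (subst card_Un_disjoint) (auto simp: card_image)
  finally show ?case using 1 by simp
next
  case "2_1"
  then show ?case by (simp add: adjacencies_def)
next
  case ("2_2" v)
  then show ?case by (simp add: adjacencies_def)
qed

lemma adjr_Cons: "adjr (x # L) = (if L \<noteq> [] \<and> hd L = Suc x then 1 else 0) + adjr L"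
  by (cases L) auto

lemma adjr_append:
  "A \<noteq> [] \<Longrightarrow> B \<noteq> [] \<Longrightarrow> adjr (A @ B) = adjr A + adjr B + (if hd B = Suc (last A) then 1 else 0)"
proof (induction A)
  case Nil
  then show ?case by simp
next
  case (Cons a A')
  show ?case
  proof (cases "A' = []")
    case True
    then show ?thesis using Cons by (simp add: adjr_Cons)
  next
    case False
    then show ?thesis using Cons by (simp add: adjr_Cons[of a "A' @ B"] adjr_Cons[of a A'])
  qed
qed

lemma hd_filter_upt:
  "(filter q [Suc k..<M] \<noteq> [] \<and> hd (filter q [Suc k..<M]) = Suc k) \<longleftrightarrow> (Suc k < M \<and> q (Suc k))"
proof (cases "Suc k < M")
  case True
  then have u: "[Suc k..<M] = Suc k # [Suc (Suc k)..<M]" by (simp add: upt_conv_Cons)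
  show ?thesis
  proof (cases "q (Suc k)")
    case qT: True
    then show ?thesis using u \<open>Suc k < M\<close> by simp
  next
    case False
    have "filter q [Suc k..<M] \<noteq> [] \<Longrightarrow> hd (filter q [Suc k..<M]) \<noteq> Suc k"
    proof -
      assume ne: "filter q [Suc k..<M] \<noteq> []"
      then have "hd (filter q [Suc k..<M]) \<in> set (filter q [Suc (Suc k)..<M])"
        using u False by (metis filter.simps(2) hd_in_set)
      then show ?thesis by auto
    qed
    then show ?thesis using False by auto
  qed
next
  case False
  then show ?thesis by simp
qed

lemma adjr_filter_upt:
  "adjr (filter q [k..<k+n]) + adjr (filter (\<lambda>x. \<not> q x) [k..<k+n]) = adjw (map q [k..<k+n])"
proof (induction n arbitrary: k)
  case 0
  then show ?case by simp
next
  case (Suc n)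
  have u: "[k..<k + Suc n] = k # [Suc k..<Suc k + n]" by (simp add: upt_conv_Cons)
  have h1: "(filter q [Suc k..<Suc k + n] \<noteq> [] \<and> hd (filter q [Suc k..<Suc k + n]) = Suc k) \<longleftrightarrow> (0 < n \<and> q (Suc k))"
    using hd_filter_upt[of q k "Suc k + n"] by simp
  have h2: "(filter (\<lambda>x. \<not> q x) [Suc k..<Suc k + n] \<noteq> [] \<and> hd (filter (\<lambda>x. \<not> q x) [Suc k..<Suc k + n]) = Suc k) \<longleftrightarrow> (0 < n \<and> \<not> q (Suc k))"
    using hd_filter_upt[of "\<lambda>x. \<not> q x" k "Suc k + n"] by simp
  have h3: "(map q [Suc k..<Suc k + n] \<noteq> [] \<and> hd (map q [Suc k..<Suc k + n]) = q k) \<longleftrightarrow> (0 < n \<and> q (Suc k) = q k)"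
    by (cases n) (simp_all add: upt_conv_Cons del: upt_Suc)
  define R where "R = [Suc k..<Suc k + n]"
  have IH: "adjr (filter q R) + adjr (filter (\<lambda>x. \<not> q x) R) = adjw (map q R)"
    unfolding R_def using Suc.IH[of "Suc k"] by simp
  have aw: "adjw (map q (k # R)) = (if 0 < n \<and> q (Suc k) = q k then 1 else 0) + adjw (map q R)"
    using h3 unfolding R_def by (simp only: list.map adjw_Cons)
  show ?case
  proof (cases "q k")
    case True
    have "adjr (filter q (k # R)) = (if 0 < n \<and> q (Suc k) then 1 else 0) + adjr (filter q R)"
      using h1 True unfolding R_def by (simp only: filter.simps if_True adjr_Cons)
    moreover have "filter (\<lambda>x. \<not> q x) (k # R) = filter (\<lambda>x. \<not> q x) R" using True by simp
    ultimately show ?thesis unfolding u R_def[symmetric] aw using IH True by simp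
  next
    case False
    have "adjr (filter (\<lambda>x. \<not> q x) (k # R)) = (if 0 < n \<and> \<not> q (Suc k) then 1 else 0) + adjr (filter (\<lambda>x. \<not> q x) R)"
      using h2 False unfolding R_def by (simp only: filter.simps if_True adjr_Cons not_False_eq_True)
    moreover have "filter q (k # R) = filter q R" using False by simp
    ultimately show ?thesis unfolding u R_def[symmetric] aw using IH False by simp
  qed
qed

lemma sorted_le_last: "sorted xs \<Longrightarrow> x \<in> set xs \<Longrightarrow> x \<le> last xs"
proof (induction xs rule: rev_induct)
  case Nil then show ?case by simp
next
  case (snoc a xs) then show ?case by (auto simp: sorted_append)
qed

lemma sorted_hd_le: "sorted xs \<Longrightarrow> x \<in> set xs \<Longrightarrow> hd xs \<le> x"
  by (cases xs) auto

lemma adj_blk: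
  assumes ns: "\<not> sorted (blk q [1..<m+1])"
  shows "adjacencies (blk q [1..<m+1]) = adjw (map q [1..<m+1])"
proof -
  define A where "A = filter q [1..<m+1]"
  define B where "B = filter (\<lambda>x. \<not> q x) [1..<m+1]"
  have aAB: "blk q [1..<m+1] = A @ B" unfolding blk_def A_def B_def by simp
  have sA: "sorted A" "sorted B" unfolding A_def B_def by (rule sorted_filter_upt)+
  have ne: "A \<noteq> []" "B \<noteq> []" using ns aAB sA by auto
  have nb: "hd B \<noteq> Suc (last A)"
  proof
    assume h: "hd B = Suc (last A)"
    have "\<forall>x\<in>set A. \<forall>y\<in>set B. x \<le> y"
    proof (intro ballI)
      fix x y assume "x \<in> set A" "y \<in> set B"
      then have "x \<le> last A" "hd B \<le> y" using sorted_le_last sorted_hd_le sA by auto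
      then show "x \<le> y" using h by simp
    qed
    then have "sorted (A @ B)" using sA by (simp add: sorted_append)
    then show False using ns aAB by simp
  qed
  have "adjacencies (blk q [1..<m+1]) = adjr A + adjr B"
    using adjacencies_adjr adjr_append[OF ne] nb aAB by simp
  also have "\<dots> = adjw (map q [1..<m+1])"
    using adjr_filter_upt[of q 1 m] unfolding A_def B_def by simp
  finally show ?thesis .
qed



lemma perm_contains_eq:
  assumes "is_perm z" "is_perm b" "z \<preceq>\<^sub>p b" "length z = length b"
  shows "z = b"
proof -
  obtain ys where ys: "subseq ys b" "order_iso z ys" using assms(3) by (auto simp: contains_subseq)
  have "length ys = length b" using order_iso_length[OF ys(2)] assms(4) by simp
  then have "ys = b" using subseq_same_length[OF ys(1)] by simp
  then show ?thesis using perm_iso_eq[OF assms(1,2)] ys(2) by simp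
qed

lemma finite_perms_below: "finite {z. is_perm z \<and> P z \<and> z \<preceq>\<^sub>p b}"
proof (rule finite_subset)
  show "{z. is_perm z \<and> P z \<and> z \<preceq>\<^sub>p b} \<subseteq> {xs. set xs \<subseteq> {1..length b} \<and> length xs \<le> length b}"
  proof
    fix z assume "z \<in> {z. is_perm z \<and> P z \<and> z \<preceq>\<^sub>p b}"
    then have "is_perm z" "length z \<le> length b" using contains_length by auto
    then show "z \<in> {xs. set xs \<subseteq> {1..length b} \<and> length xs \<le> length b}"
      unfolding is_perm_def by auto
  qed
  show "finite {xs. set xs \<subseteq> {1..length b} \<and> length xs \<le> length b}"
    by (rule finite_lists_length_le) simp
qed

lemma mu_refl: "mu a a = 1"
  by (subst mu.simps) simp

lemma mu_sum:
  assumes "is_perm a" "is_perm b" "a \<preceq>\<^sub>p b"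
  shows "(\<Sum>z\<in>{z. is_perm z \<and> a \<preceq>\<^sub>p z \<and> z \<preceq>\<^sub>p b}. mu a z) = (if a = b then 1 else 0)"
proof (cases "a = b")
  case True
  have "{z. is_perm z \<and> a \<preceq>\<^sub>p z \<and> z \<preceq>\<^sub>p b} = {a}"
  proof
    show "{z. is_perm z \<and> a \<preceq>\<^sub>p z \<and> z \<preceq>\<^sub>p b} \<subseteq> {a}"
    proof
      fix z assume z: "z \<in> {z. is_perm z \<and> a \<preceq>\<^sub>p z \<and> z \<preceq>\<^sub>p b}"
      then have "length z = length a" using True contains_length by (metis (mono_tags, lifting) le_antisym mem_Collect_eq)
      then show "z \<in> {a}" using perm_contains_eq[of z a] z True assms by auto
    qed
    show "{a} \<subseteq> {z. is_perm z \<and> a \<preceq>\<^sub>p z \<and> z \<preceq>\<^sub>p b}" using True assms contains_refl by auto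
  qed
  then show ?thesis using True by (simp add: mu_refl)
next
  case False
  define S where "S = {z. is_perm z \<and> length z < length b \<and> a \<preceq>\<^sub>p z \<and> z \<preceq>\<^sub>p b}"
  have eq: "{z. is_perm z \<and> a \<preceq>\<^sub>p z \<and> z \<preceq>\<^sub>p b} = insert b S"
  proof
    show "{z. is_perm z \<and> a \<preceq>\<^sub>p z \<and> z \<preceq>\<^sub>p b} \<subseteq> insert b S"
    proof
      fix z assume z: "z \<in> {z. is_perm z \<and> a \<preceq>\<^sub>p z \<and> z \<preceq>\<^sub>p b}"
      then have le: "length z \<le> length b" using contains_length by auto
      show "z \<in> insert b S"
      proof (cases "length z = length b")
        case True
        then show ?thesis using perm_contains_eq[of z b] z assms by auto
      next
        case False
        then show ?thesis using le z unfolding S_def by auto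
      qed
    qed
    show "insert b S \<subseteq> {z. is_perm z \<and> a \<preceq>\<^sub>p z \<and> z \<preceq>\<^sub>p b}"
      unfolding S_def using assms contains_refl by auto
  qed
  have fin: "finite S" unfolding S_def using finite_perms_below[of "\<lambda>z. length z < length b \<and> a \<preceq>\<^sub>p z" b]
    by (simp add: conj_assoc)
  have nb: "b \<notin> S" unfolding S_def by simp
  have mab: "mu a b = - (\<Sum>z\<in>S. mu a z)"
    unfolding S_def by (subst mu.simps) (simp add: False assms(3))
  show ?thesis using eq fin nb mab False by simp
qed

lemma mobius_inversion:
  fixes f :: "nat list \<Rightarrow> int"
  assumes s: "is_perm s" and p: "is_perm p" and sp: "s \<preceq>\<^sub>p p"
    and H: "\<And>a. is_perm a \<Longrightarrow> s \<preceq>\<^sub>p a \<Longrightarrow> a \<preceq>\<^sub>p p \<Longrightarrow>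
       (\<Sum>z\<in>{z. is_perm z \<and> a \<preceq>\<^sub>p z \<and> z \<preceq>\<^sub>p p}. f z) = (if a = p then 1 else 0)"
  shows "mu s p = f s"
proof -
  define J where "J = {z. is_perm z \<and> s \<preceq>\<^sub>p z \<and> z \<preceq>\<^sub>p p}"
  have fin: "finite J" unfolding J_def by (rule finite_perms_below)
  have pJ: "p \<in> J" "s \<in> J" unfolding J_def using s p sp contains_refl by auto
  have "mu s p = (\<Sum>z\<in>J. (if z = p then mu s z else 0))"
    using fin pJ by simp
  also have "\<dots> = (\<Sum>z\<in>J. mu s z * (\<Sum>y\<in>{y. is_perm y \<and> z \<preceq>\<^sub>p y \<and> y \<preceq>\<^sub>p p}. f y))"
  proof (rule sum.cong[OF refl])
    fix z assume "z \<in> J"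
    then have "(\<Sum>y\<in>{y. is_perm y \<and> z \<preceq>\<^sub>p y \<and> y \<preceq>\<^sub>p p}. f y) = (if z = p then 1 else 0)"
      using H unfolding J_def by auto
    then show "(if z = p then mu s z else 0) = mu s z * (\<Sum>y\<in>{y. is_perm y \<and> z \<preceq>\<^sub>p y \<and> y \<preceq>\<^sub>p p}. f y)"
      by simp
  qed
  also have "\<dots> = (\<Sum>z\<in>J. \<Sum>y\<in>{y. y \<in> J \<and> z \<preceq>\<^sub>p y}. mu s z * f y)"
  proof (rule sum.cong[OF refl])
    fix z assume z: "z \<in> J"
    have "{y. is_perm y \<and> z \<preceq>\<^sub>p y \<and> y \<preceq>\<^sub>p p} = {y. y \<in> J \<and> z \<preceq>\<^sub>p y}"
      using z unfolding J_def by (auto intro: contains_trans)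
    then show "mu s z * (\<Sum>y\<in>{y. is_perm y \<and> z \<preceq>\<^sub>p y \<and> y \<preceq>\<^sub>p p}. f y) = (\<Sum>y\<in>{y. y \<in> J \<and> z \<preceq>\<^sub>p y}. mu s z * f y)"
      by (simp add: sum_distrib_left)
  qed
  also have "\<dots> = (\<Sum>y\<in>J. \<Sum>z\<in>{z. z \<in> J \<and> z \<preceq>\<^sub>p y}. mu s z * f y)"
    by (rule sum.swap_restrict[OF fin fin])
  also have "\<dots> = (\<Sum>y\<in>J. f y * (if s = y then 1 else 0))"
  proof (rule sum.cong[OF refl])
    fix y assume y: "y \<in> J"
    have "{z. z \<in> J \<and> z \<preceq>\<^sub>p y} = {z. is_perm z \<and> s \<preceq>\<^sub>p z \<and> z \<preceq>\<^sub>p y}"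
      using y unfolding J_def by (auto intro: contains_trans)
    then have "(\<Sum>z\<in>{z. z \<in> J \<and> z \<preceq>\<^sub>p y}. mu s z * f y) = f y * (\<Sum>z\<in>{z. is_perm z \<and> s \<preceq>\<^sub>p z \<and> z \<preceq>\<^sub>p y}. mu s z)"
      by (simp add: sum_distrib_left mult.commute)
    also have "\<dots> = f y * (if s = y then 1 else 0)"
      using mu_sum[OF s] y unfolding J_def by simp
    finally show "(\<Sum>z\<in>{z. z \<in> J \<and> z \<preceq>\<^sub>p y}. mu s z * f y) = f y * (if s = y then 1 else 0)" .
  qed
  also have "\<dots> = f s" using fin pJ by (simp add: if_distrib cong: if_cong)
  finally show ?thesis .
qed



lemma sum_swap_list:
  "(\<Sum>z\<in>Z. sum_list (map (g z) xs)) = sum_list (map (\<lambda>x. \<Sum>z\<in>Z. g z x) xs)"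
  by (induction xs) (simp_all add: sum.distrib)

lemma int_sum_list: "int (sum_list (map f xs)) = sum_list (map (\<lambda>x. int (f x)) xs)"
  by (induction xs) simp_all

lemma pow_minus_diff: "k \<le> n \<Longrightarrow> (-1::int)^(n-k) = (-1)^n * (-1)^k"
proof -
  assume "k \<le> n"
  then have "(-1::int)^n = (-1)^(n-k) * (-1)^k" by (metis le_add_diff_inverse2 power_add)
  then have "(-1::int)^n * (-1)^k = (-1)^(n-k) * ((-1)^k * (-1)^k)" by (simp add: mult.assoc)
  also have "(-1::int)^k * (-1)^k = 1" by (simp flip: power_add)
  finally show ?thesis by simp
qed

lemma in_subseqs_upt_sorted: "ws \<in> set (subseqs [a..<b]) \<Longrightarrow> sorted_wrt (<) ws"
  using subseq_sorted_wrt[of ws "[a..<b]" "(<)"] sorted_wrt_upt_less by simp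

lemma length_alt[simp]: "length (alt x n) = n"
  by (induction n arbitrary: x) auto

lemma main_blk:
  assumes c: "\<forall>j. c (Suc j) = (\<not> c j)" and pi: "pi = blk c [1..<n+1]"
    and sp: "is_perm sigma" and sm: "length sigma = m" and sd: "card (descents sigma) = 1"
    and si: "adjacencies sigma = i" and pd: "card (descents pi) = 1" and sle: "sigma \<preceq>\<^sub>p pi"
  shows "mu sigma pi = (-1) ^ (n - m) *
           int (((n + m - i - (if related sigma pi then 0 else 1)) div 2) choose m)"
proof -
  define cnt where "cnt z = sum_list (map (\<lambda>ys. if order_iso z ys then 1::int else 0) (subseqs pi))" for z
  define f where "f z = (-1::int)^(n - length z) * cnt z" for z
  have pp: "is_perm pi" unfolding pi by (rule is_perm_blk)
  have dpi: "distinct pi" using pp unfolding is_perm_def by simp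
  have ns: "\<not> sorted sigma" using one_descent_not_sorted[OF sd] .
  have alt: "map c [1..<n+1] = alt (c 1) n"
    using map_alt[OF c, of 1 n] by (simp add: add.commute)
  have lenbs: "\<And>bs. bs \<in> set (subseqs (alt (c 1) n)) \<Longrightarrow> length bs \<le> n"
    using list_emb_length[of "(=)" _ "alt (c 1) n"] by fastforce
  have H: "(\<Sum>z\<in>{z. is_perm z \<and> a \<preceq>\<^sub>p z \<and> z \<preceq>\<^sub>p pi}. f z) = (if a = pi then 1 else 0)"
    if ap: "is_perm a" and sa: "sigma \<preceq>\<^sub>p a" and api: "a \<preceq>\<^sub>p pi" for a
  proof -
    obtain q where aq: "a = blk q [1..<length a+1]" using struct_below[OF ap api[unfolded pi]] by blast
    have nsa: "\<not> sorted a" using contains_not_sorted[OF sa ns] .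
    define u where "u = map q [1..<length a+1]"
    define Z where "Z = {z. is_perm z \<and> a \<preceq>\<^sub>p z \<and> z \<preceq>\<^sub>p pi}"
    have "(\<Sum>z\<in>Z. f z) = (\<Sum>z\<in>Z. sum_list (map (\<lambda>ys. if order_iso z ys then (-1::int)^(n - length z) else 0) (subseqs pi)))"
      unfolding f_def cnt_def by (simp add: sum_list_const_mult[symmetric] if_distrib cong: if_cong)
    also have "\<dots> = sum_list (map (\<lambda>ys. \<Sum>z\<in>Z. if order_iso z ys then (-1::int)^(n - length z) else 0) (subseqs pi))"
      by (rule sum_swap_list)
    also have "\<dots> = sum_list (map (\<lambda>ys. if a \<preceq>\<^sub>p ys then (-1::int)^(n - length ys) else 0) (subseqs pi))"
    proof (rule arg_cong[where f=sum_list], rule map_cong[OF refl])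
      fix ys assume ys: "ys \<in> set (subseqs pi)"
      have sub: "subseq ys pi" using ys by simp
      have dys: "distinct ys" using subseqs_distinctD[OF ys dpi] .
      have "(\<Sum>z\<in>Z. if order_iso z ys then (-1::int)^(n - length z) else 0) =
            (\<Sum>z\<in>{z\<in>Z. order_iso z ys}. (-1::int)^(n - length z))"
        by (rule sum.inter_filter[symmetric]) (simp add: Z_def finite_perms_below)
      also have "\<dots> = (if a \<preceq>\<^sub>p ys then (-1::int)^(n - length ys) else 0)"
      proof (cases "a \<preceq>\<^sub>p ys")
        case True
        obtain x where x: "is_perm x" "order_iso x ys" using std_exists[OF dys] by blast
        have "{z\<in>Z. order_iso z ys} = {x}"
        proof
          show "{z\<in>Z. order_iso z ys} \<subseteq> {x}"
          proof
            fix z assume "z \<in> {z\<in>Z. order_iso z ys}"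
            then have "is_perm z" "order_iso z ys" unfolding Z_def by auto
            then have "z = x" using perm_iso_eq x order_iso_trans order_iso_sym by metis
            then show "z \<in> {x}" by simp
          qed
          have "a \<preceq>\<^sub>p x" using contains_iso_right[OF True order_iso_sym[OF x(2)]] .
          moreover have "x \<preceq>\<^sub>p pi" using sub x(2) unfolding contains_subseq by blast
          ultimately show "{x} \<subseteq> {z\<in>Z. order_iso z ys}" using x unfolding Z_def by auto
        qed
        moreover have "length x = length ys" using order_iso_length[OF x(2)] .
        ultimately show ?thesis using True by simp
      next
        case False
        have e: "{z\<in>Z. order_iso z ys} = {}"
          using False contains_iso_right unfolding Z_def by blast
        show ?thesis unfolding e using False by simp
      qed
      finally show "(\<Sum>z\<in>Z. if order_iso z ys then (-1::int)^(n - length z) else 0) =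
        (if a \<preceq>\<^sub>p ys then (-1::int)^(n - length ys) else 0)" .
    qed
    also have "\<dots> = sum_list (map (\<lambda>ws. if a \<preceq>\<^sub>p blk c ws then (-1::int)^(n - length ws) else 0) (subseqs [1..<n+1]))"
      unfolding pi by (subst sum_subseqs_blk) (simp cong: if_cong del: upt_Suc)
    also have "\<dots> = sum_list (map (\<lambda>ws. if subseq u (map c ws) then (-1::int)^(n - length (map c ws)) else 0) (subseqs [1..<n+1]))"
    proof (rule arg_cong[where f=sum_list], rule map_cong[OF refl])
      fix ws assume "ws \<in> set (subseqs [1..<n+1])"
      then have "sorted_wrt (<) ws" by (rule in_subseqs_upt_sorted)
      then show "(if a \<preceq>\<^sub>p blk c ws then (-1::int)^(n - length ws) else 0) =
        (if subseq u (map c ws) then (-1::int)^(n - length (map c ws)) else 0)"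
        using contains_blk[OF aq nsa] unfolding u_def by simp
    qed
    also have "\<dots> = sum_list (map (\<lambda>bs. if subseq u bs then (-1::int)^(n - length bs) else 0) (subseqs (alt (c 1) n)))"
      unfolding alt[symmetric] subseqs_map by (simp add: comp_def)
    also have "\<dots> = sum_list (map (\<lambda>bs. (-1::int)^n * (if subseq u bs then (-1::int)^length bs else 0)) (subseqs (alt (c 1) n)))"
      by (rule arg_cong[where f=sum_list], rule map_cong[OF refl]) (simp add: pow_minus_diff lenbs)
    also have "\<dots> = (-1::int)^n * (if u = alt (c 1) n then (-1)^n else 0)"
      by (simp add: sum_list_const_mult Nsum)
    also have "\<dots> = (if u = alt (c 1) n then 1 else 0)"
      by (simp flip: power_add)
    also have "(u = alt (c 1) n) = (a = pi)"
    proof -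
      have "(u = alt (c 1) n) = order_iso a (blk c [1..<n+1])"
        using core_iso[OF aq nsa sorted_wrt_upt_less[of 1 "n+1"], of c] alt unfolding u_def
        by (simp del: upt_Suc)
      also have "\<dots> = (a = pi)"
        using perm_iso_eq[OF ap pp] order_iso_refl unfolding pi by auto
      finally show ?thesis .
    qed
    finally show ?thesis unfolding Z_def .
  qed
  have mu: "mu sigma pi = f sigma"
    by (rule mobius_inversion[OF sp pp sle]) (use H in blast)
  obtain q where sq: "sigma = blk q [1..<m+1]" using struct_below[OF sp sle[unfolded pi]] sm by blast
  define u where "u = map q [1..<m+1]"
  have m0: "m \<noteq> 0" using ns sm by auto
  have "cnt sigma = sum_list (map (\<lambda>ws. if order_iso sigma (blk c ws) then 1::int else 0) (subseqs [1..<n+1]))"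
    unfolding cnt_def pi by (rule sum_subseqs_blk)
  also have "\<dots> = sum_list (map (\<lambda>ws. if map c ws = u then 1::int else 0) (subseqs [1..<n+1]))"
  proof (rule arg_cong[where f=sum_list], rule map_cong[OF refl])
    fix ws assume "ws \<in> set (subseqs [1..<n+1])"
    then have "sorted_wrt (<) ws" by (rule in_subseqs_upt_sorted)
    then show "(if order_iso sigma (blk c ws) then 1::int else 0) = (if map c ws = u then 1 else 0)"
      using core_iso[OF sq ns] unfolding u_def by auto
  qed
  also have "\<dots> = sum_list (map (\<lambda>bs. if bs = u then 1::int else 0) (subseqs (alt (c 1) n)))"
    unfolding alt[symmetric] subseqs_map by (simp add: comp_def)
  also have "\<dots> = int (Cnt u (alt (c 1) n))"
    unfolding Cnt_def int_sum_list by (simp add: if_distrib cong: if_cong)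
  finally have cs: "cnt sigma = int (Cnt u (alt (c 1) n))" .
  have e1: "[1..<m+1] = 1 # [Suc 1..<m+1]" using m0 by (subst upt_rec) simp
  have une: "u \<noteq> []" "length u = m" "hd u = q 1"
    unfolding u_def using m0 by (simp_all only: e1 list.map list.sel) (simp_all del: upt_Suc)
  have adj: "adjw u = i" using adj_blk[of q m] sq ns si unfolding u_def by simp
  have rel: "related sigma pi = (q 1 = c 1)"
    unfolding related_def using obd_blk[OF sd sq] obd_blk[OF pd pi] by simp
  have "Cnt u (alt (c 1) n) = ((n + m - i - (if related sigma pi then 0 else 1)) div 2) choose m"
    using cnt_alt[OF une(1), of "c 1" n] une adj rel by simp
  then show ?thesis using mu cs sm unfolding f_def by simp
qed



theorem mainTheorem12:
  fixes sigma pi :: "nat list" and m n i :: nat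
  assumes "is_perm sigma" and "length sigma = m"
    and "card (descents sigma) = 1" and "adjacencies sigma = i"
    and "pi = M_perm n \<or> pi = W_perm n"
    and "card (descents pi) = 1"
    and "sigma \<preceq>\<^sub>p pi"
  shows "mu sigma pi = (-1) ^ (n - m) *
           int (((n + m - i - (if related sigma pi then 0 else 1)) div 2) choose m)"
proof -
  from assms(5) obtain c where c: "\<forall>j. c (Suc j) = (\<not> c j)" "pi = blk c [1..<n+1]"
  proof
    assume "pi = M_perm n"
    then have e: "pi = blk even [1..<n+1]" unfolding M_perm_def blk_def by (simp only:)
    have a: "\<forall>j. even (Suc j) = (\<not> even (j::nat))" by simp
    show thesis by (rule that[of even, OF a e])
  next
    assume "pi = W_perm n"
    then have e: "pi = blk odd [1..<n+1]" unfolding W_perm_def blk_def by (simp only: not_not)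
    have a: "\<forall>j. odd (Suc j) = (\<not> odd (j::nat))" by simp
    show thesis by (rule that[of odd, OF a e])
  qed
  show ?thesis
    by (rule main_blk[OF c(1) c(2) assms(1-4) assms(6,7)])
qed

end
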